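(* Let $S$ be a finite set and $\mu\colon\mathscr P(S)\to\mathbf Z$ a submodular, non-decreasing function on its power set. Let $P_\mu=\{\mathbf x\in\mathbf R^S\mid \mathbf x\ge\mathbf 0,\ \mathbf x\cdot\mathbf i_U\le\mu(U)\text{ for all }U\subset S\}$ and $B_\mu=\{\mathbf x\in P_\mu\mid \mathbf x\cdot\mathbf i_S=\mu(S)\}$. Write $I_\mu(\xi)=\sum_{j=0}^{|S|-1}a_j\xi^j$ and $X_\mu(\eta)=\sum_{j=0}^{|S|-1}b_j\eta^j$. Then for every non-negative integer $k$, \[\bigl|(B_\mu+k\nabla_S)\cap\mathbf Z^S\bigr|=\sum_{j=0}^{|S|-1}a_j\binom{k+|S|-1-j}{|S|-1-j},\qquad \bigl|(B_\mu+k\Delta_S)\cap\mathbf Z^S\bigr|=\sum_{j=0}^{|S|-1}b_j\binom{k+|S|-1-j}{|S|-1-j}.\]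
   Context: $\mathbf i_U\in\mathbf R^S$ denotes the indicator vector of $U\subset S$; $+$ between sets is Minkowski sum. $\Delta_S=\operatorname{conv}\{\mathbf i_{\{s\}}\mid s\in S\}$ is the standard simplex and $\nabla_S=-\Delta_S=\operatorname{conv}\{-\mathbf i_{\{s\}}\mid s\in S\}$ the inverted simplex. The bases of $\mu$ are the integer points of $B_\mu$. Fix a linear order on $S$. For a basis $\mathbf f$, an element $s\in S$ is internally active if there is no $s'<s$ such that $\mathbf f-\mathbf i_{\{s\}}+\mathbf i_{\{s'\}}$ is a basis, and externally active if there is no $s'<s$ such that $\mathbf f+\mathbf i_{\{s\}}-\mathbf i_{\{s'\}}$ is a basis. Let $\bar\iota(\mathbf f)$, resp. $\bar\epsilon(\mathbf f)$, be $|S|$ minus the number of internally, resp. externally, active elements. The interior and exterior polynomials are $I_\mu(\xi)=\sum_{\mathbf f}\xi^{\bar\iota(\mathbf f)}$ and $X_\mu(\eta)=\sum_{\mathbf f}\eta^{\bar\epsilon(\mathbf f)}$, summed over all bases $\mathbf f$ (their degrees are at most $|S|-1$). *)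

theory Defs
  imports "HOL-Analysis.Analysis" "HOL-Computational_Algebra.Polynomial"
begin

text \<open>The finite ground set S with its fixed linear order is rendered as a finite
  linearly ordered type 'a; R^S is real^'a and Z^S the integer points in it.\<close>

definition ind :: "'a::finite set \<Rightarrow> real^'a" where
  "ind U = (\<chi> s. if s \<in> U then 1 else 0)"

definition minkowski :: "(real^'a::finite) set \<Rightarrow> ((real, 'a) vec) set \<Rightarrow> ((real, 'a) vec) set" where
  "minkowski A B = {a + b | a b. a \<in> A \<and> b \<in> B}"

definition std_simplex :: "(real^'a::finite) set" where
  "std_simplex = convex hull (range (\<lambda>s. ind {s}))"

definition inv_simplex :: "(real^'a::finite) set" where
  "inv_simplex = convex hull (range (\<lambda>s. - ind {s}))"

definition integer_points :: "(real^'a::finite) set \<Rightarrow> ((real, 'a) vec) set" where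
  "integer_points A = {x \<in> A. \<forall>s. x $ s \<in> \<int>}"

definition P_mu :: "('a::finite set \<Rightarrow> int) \<Rightarrow> ((real, 'a) vec) set" where
  "P_mu \<mu> = {x. (\<forall>s. 0 \<le> x $ s) \<and> (\<forall>U. x \<bullet> ind U \<le> of_int (\<mu> U))}"

definition B_mu :: "('a::finite set \<Rightarrow> int) \<Rightarrow> ((real, 'a) vec) set" where
  "B_mu \<mu> = {x \<in> P_mu \<mu>. x \<bullet> ind UNIV = of_int (\<mu> UNIV)}"

definition bases :: "('a::finite set \<Rightarrow> int) \<Rightarrow> ((real, 'a) vec) set" where
  "bases \<mu> = integer_points (B_mu \<mu>)"

definition int_active :: "('a::{finite,linorder} set \<Rightarrow> int) \<Rightarrow> ((real, 'a) vec) \<Rightarrow> 'a \<Rightarrow> bool" where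
  "int_active \<mu> f s = (\<not> (\<exists>s'. s' < s \<and> f - ind {s} + ind {s'} \<in> bases \<mu>))"

definition ext_active :: "('a::{finite,linorder} set \<Rightarrow> int) \<Rightarrow> ((real, 'a) vec) \<Rightarrow> 'a \<Rightarrow> bool" where
  "ext_active \<mu> f s = (\<not> (\<exists>s'. s' < s \<and> f + ind {s} - ind {s'} \<in> bases \<mu>))"

definition iota_bar :: "('a::{finite,linorder} set \<Rightarrow> int) \<Rightarrow> ((real, 'a) vec) \<Rightarrow> nat" where
  "iota_bar \<mu> f = CARD('a) - card {s. int_active \<mu> f s}"

definition eps_bar :: "('a::{finite,linorder} set \<Rightarrow> int) \<Rightarrow> ((real, 'a) vec) \<Rightarrow> nat" where
  "eps_bar \<mu> f = CARD('a) - card {s. ext_active \<mu> f s}"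

definition interior_poly :: "('a::{finite,linorder} set \<Rightarrow> int) \<Rightarrow> int poly" where
  "interior_poly \<mu> = (\<Sum>f\<in>bases \<mu>. monom 1 (iota_bar \<mu> f))"

definition exterior_poly :: "('a::{finite,linorder} set \<Rightarrow> int) \<Rightarrow> int poly" where
  "exterior_poly \<mu> = (\<Sum>f\<in>bases \<mu>. monom 1 (eps_bar \<mu> f))"

end

theory Submission
  imports Defs "HOL-Library.Function_Algebras"
begin

definition vi :: "('a::finite \<Rightarrow> int) \<Rightarrow> real^'a" where
  "vi g = (\<chi> s. of_int (g s))"

definition dl :: "'a \<Rightarrow> 'a \<Rightarrow> int" where
  "dl s = (\<lambda>t. if t = s then 1 else 0)"

definition indep :: "('a::finite set \<Rightarrow> int) \<Rightarrow> ('a \<Rightarrow> int) \<Rightarrow> bool" where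
  "indep \<mu> g = ((\<forall>s. 0 \<le> g s) \<and> (\<forall>U. sum g U \<le> \<mu> U))"

definition IB :: "('a::finite set \<Rightarrow> int) \<Rightarrow> ('a \<Rightarrow> int) set" where
  "IB \<mu> = {g. indep \<mu> g \<and> sum g UNIV = \<mu> UNIV}"

lemma inner_ind: "x \<bullet> ind U = (\<Sum>s\<in>U. x $ s)"
  unfolding inner_vec_def ind_def
  by (simp add: if_distrib sum.If_cases)

lemma vi_ind: "vi g \<bullet> ind U = of_int (sum g U)"
  by (simp add: inner_ind vi_def)

lemma vi_inj: "inj vi"
  by (rule injI) (auto simp: vi_def vec_eq_iff)

lemma vi_eq_iff[simp]: "vi f = vi g \<longleftrightarrow> f = g"
  using vi_inj by (auto dest: injD)

lemma vi_in_B: "vi g \<in> B_mu \<mu> \<longleftrightarrow> g \<in> IB \<mu>"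
  by (auto simp: B_mu_def P_mu_def IB_def indep_def vi_ind simp del: of_int_sum) (auto simp: vi_def)

lemma integer_vec: "\<forall>s. x $ s \<in> \<int> \<Longrightarrow> x = vi (\<lambda>s. \<lfloor>x $ s\<rfloor>)"
  by (auto simp: vi_def vec_eq_iff elim!: Ints_cases)

lemma vi_integer: "\<forall>s. vi g $ s \<in> \<int>"
  by (simp add: vi_def)

lemma bases_eq: "bases \<mu> = vi ` IB \<mu>"
proof
  show "bases \<mu> \<subseteq> vi ` IB \<mu>"
  proof
    fix x assume "x \<in> bases \<mu>"
    then have x: "x \<in> B_mu \<mu>" "\<forall>s. x $ s \<in> \<int>" by (auto simp: bases_def integer_points_def)
    have "x = vi (\<lambda>s. \<lfloor>x $ s\<rfloor>)" by (rule integer_vec[OF x(2)])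
    with x(1) show "x \<in> vi ` IB \<mu>" by (metis image_eqI vi_in_B)
  qed
  show "vi ` IB \<mu> \<subseteq> bases \<mu>"
    by (auto simp: bases_def integer_points_def vi_in_B vi_integer)
qed

lemma vi_in_bases: "vi g \<in> bases \<mu> \<longleftrightarrow> g \<in> IB \<mu>"
  by (auto simp: bases_eq)

lemma vi_diff: "vi (f - g) = vi f - vi g" and vi_add: "vi (f + g) = vi f + vi g"
  by (auto simp: vi_def vec_eq_iff)

lemma vi_dl: "vi (dl s) = ind {s}"
  by (auto simp: vi_def vec_eq_iff dl_def ind_def)

lemma int_active_iff: "int_active \<mu> (vi f) s \<longleftrightarrow> \<not> (\<exists>s'. s' < s \<and> f - dl s + dl s' \<in> IB \<mu>)"
  unfolding int_active_def by (simp add: vi_diff vi_add vi_dl vi_in_bases flip: vi_dl vi_diff vi_add)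

lemma ext_active_iff: "ext_active \<mu> (vi f) s \<longleftrightarrow> \<not> (\<exists>s'. s' < s \<and> f + dl s - dl s' \<in> IB \<mu>)"
  unfolding ext_active_def by (simp add: vi_in_bases flip: vi_dl vi_diff vi_add)

lemma sum_dl: "finite U \<Longrightarrow> sum (dl a) U = (if a \<in> U then 1 else 0)"
  by (simp add: dl_def)

definition tight :: "('a::finite set \<Rightarrow> int) \<Rightarrow> ('a \<Rightarrow> int) \<Rightarrow> 'a set \<Rightarrow> bool" where
  "tight \<mu> f U = (sum f U = \<mu> U)"

lemma tight_Un_Int:
  assumes submod: "\<forall>A B. \<mu> (A \<union> B) + \<mu> (A \<inter> B) \<le> \<mu> A + \<mu> B"
    and ind: "indep \<mu> f" and A: "tight \<mu> f A" and B: "tight \<mu> f B"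
  shows "tight \<mu> f (A \<union> B) \<and> tight \<mu> f (A \<inter> B)"
proof -
  have e: "sum f (A \<union> B) + sum f (A \<inter> B) = sum f A + sum f B"
    by (rule sum.union_inter) auto
  have "sum f (A \<union> B) \<le> \<mu> (A \<union> B)" "sum f (A \<inter> B) \<le> \<mu> (A \<inter> B)"
    using ind by (auto simp: indep_def)
  moreover have "\<mu> (A \<union> B) + \<mu> (A \<inter> B) \<le> \<mu> A + \<mu> B" using submod by blast
  ultimately show ?thesis using e A B by (auto simp: tight_def)
qed

lemma tight_family:
  assumes submod: "\<forall>A B. \<mu> (A \<union> B) + \<mu> (A \<inter> B) \<le> \<mu> A + \<mu> B"
    and ind: "indep \<mu> f" and fin: "finite F" and ne: "F \<noteq> {}" and all: "\<forall>U\<in>F. tight \<mu> f U"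
  shows "tight \<mu> f (\<Union>F) \<and> tight \<mu> f (\<Inter>F)"
  using fin ne all
proof (induction F rule: finite_ne_induct)
  case (singleton x)
  then show ?case by simp
next
  case (insert x F)
  then have "tight \<mu> f (\<Union>F)" "tight \<mu> f (\<Inter>F)" "tight \<mu> f x" by auto
  then show ?case using tight_Un_Int[OF submod ind] by auto
qed

lemma sum_split_UNIV:
  fixes g :: "'a::finite \<Rightarrow> 'b::comm_monoid_add"
  shows "sum g UNIV = sum g W + sum g (- W)"
  by (metis Compl_eq_Diff_UNIV finite add.commute sum.subset_diff top_greatest)

lemma swap_IB:
  assumes f: "f \<in> IB \<mu>" and ab: "a \<noteq> b" and fa: "1 \<le> f a"
    and nt: "\<forall>U. b \<in> U \<and> a \<notin> U \<longrightarrow> sum f U < \<mu> U"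
  shows "f - dl a + dl b \<in> IB \<mu>"
proof -
  have s: "sum (f - dl a + dl b) U = sum f U - (if a \<in> U then 1 else 0) + (if b \<in> U then 1 else 0)" for U
  proof -
    have "sum (f - dl a + dl b) U = sum f U - sum (dl a) U + sum (dl b) U"
      by (simp add: sum.distrib sum_subtractf)
    then show ?thesis by (simp add: sum_dl)
  qed
  have f1: "\<forall>s. 0 \<le> f s" "\<forall>U. sum f U \<le> \<mu> U" "sum f UNIV = \<mu> UNIV"
    using f by (auto simp: IB_def indep_def)
  have "0 \<le> (f - dl a + dl b) s" for s
    using f1(1) fa by (auto simp: dl_def)
  moreover have "sum (f - dl a + dl b) U \<le> \<mu> U" for U
  proof (cases "b \<in> U \<and> a \<notin> U")
    case True
    then show ?thesis using nt s[of U] by force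
  next
    case False
    then show ?thesis using f1(2)[rule_format, of U] s[of U] by auto
  qed
  moreover have "sum (f - dl a + dl b) UNIV = \<mu> UNIV" using s[of UNIV] f1(3) by simp
  ultimately show ?thesis by (auto simp: IB_def indep_def)
qed

lemma IB_indep: "f \<in> IB \<mu> \<Longrightarrow> indep \<mu> f"
  and IB_sum: "f \<in> IB \<mu> \<Longrightarrow> sum f UNIV = \<mu> UNIV"
  and IB_nonneg: "f \<in> IB \<mu> \<Longrightarrow> 0 \<le> f s"
  and IB_le: "f \<in> IB \<mu> \<Longrightarrow> sum f U \<le> \<mu> U"
  by (auto simp: IB_def indep_def)

lemma exch1:
  assumes submod: "\<forall>A B. \<mu> (A \<union> B) + \<mu> (A \<inter> B) \<le> \<mu> A + \<mu> B"
    and f: "f \<in> IB \<mu>" and g: "g \<in> IB \<mu>" and ga: "f a < g a"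
  shows "\<exists>b. g b < f b \<and> f - dl b + dl a \<in> IB \<mu>"
proof -
  define F where "F = {U. a \<in> U \<and> tight \<mu> f U}"
  define T where "T = \<Inter>F"
  have aT: "a \<in> T" by (auto simp: T_def F_def)
  have le: "sum g T \<le> sum f T"
  proof (cases "F = {}")
    case True
    then show ?thesis using IB_sum[OF f] IB_sum[OF g] by (simp add: T_def)
  next
    case False
    have "tight \<mu> f T" using tight_family[OF submod IB_indep[OF f] finite False] by (auto simp: T_def F_def)
    then show ?thesis using IB_le[OF g, of T] by (simp add: tight_def)
  qed
  obtain b where bT: "b \<in> T" and fb: "g b < f b"
  proof (rule ccontr)
    assume "\<not> thesis"
    then have "\<forall>x\<in>T. f x \<le> g x" using that by force
    then have "sum f T < sum g T" using aT ga by (intro sum_strict_mono_ex1) auto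
    with le show False by simp
  qed
  have ab: "b \<noteq> a" using fb ga by auto
  have "f - dl b + dl a \<in> IB \<mu>"
  proof (rule swap_IB[OF f ab])
    show "1 \<le> f b" using fb IB_nonneg[OF g, of b] by simp
    show "\<forall>U. a \<in> U \<and> b \<notin> U \<longrightarrow> sum f U < \<mu> U"
    proof (intro allI impI)
      fix U assume U: "a \<in> U \<and> b \<notin> U"
      show "sum f U < \<mu> U"
      proof (rule ccontr)
        assume "\<not> sum f U < \<mu> U"
        then have "tight \<mu> f U" using IB_le[OF f, of U] by (simp add: tight_def)
        then have "U \<in> F" using U by (simp add: F_def)
        then have "T \<subseteq> U" by (auto simp: T_def)
        then show False using U bT by auto
      qed
    qed
  qed
  then show ?thesis using fb by blast
qed

lemma exch2:
  assumes submod: "\<forall>A B. \<mu> (A \<union> B) + \<mu> (A \<inter> B) \<le> \<mu> A + \<mu> B"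
    and f: "f \<in> IB \<mu>" and g: "g \<in> IB \<mu>" and ga: "g a < f a"
  shows "\<exists>b. f b < g b \<and> f + dl b - dl a \<in> IB \<mu>"
proof -
  define F where "F = {U. a \<notin> U \<and> tight \<mu> f U}"
  define W where "W = \<Union>F"
  have aW: "a \<in> - W" by (auto simp: W_def F_def)
  have le: "sum g W \<le> sum f W"
  proof (cases "F = {}")
    case True
    then show ?thesis by (simp add: W_def)
  next
    case False
    have "tight \<mu> f W" using tight_family[OF submod IB_indep[OF f] finite False] by (auto simp: W_def F_def)
    then show ?thesis using IB_le[OF g, of W] by (simp add: tight_def)
  qed
  have le2: "sum f (- W) \<le> sum g (- W)"
    using le sum_split_UNIV[of f W] sum_split_UNIV[of g W] IB_sum[OF f] IB_sum[OF g] by linarith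
  obtain b where bW: "b \<in> - W" and fb: "f b < g b"
  proof (rule ccontr)
    assume "\<not> thesis"
    then have "\<forall>x\<in>- W. g x \<le> f x" using that by force
    then have "sum g (- W) < sum f (- W)" using aW ga by (intro sum_strict_mono_ex1) auto
    with le2 show False by simp
  qed
  have ab: "a \<noteq> b" using fb ga by auto
  have "f - dl a + dl b \<in> IB \<mu>"
  proof (rule swap_IB[OF f ab])
    show "1 \<le> f a" using ga IB_nonneg[OF g, of a] by simp
    show "\<forall>U. b \<in> U \<and> a \<notin> U \<longrightarrow> sum f U < \<mu> U"
    proof (intro allI impI)
      fix U assume U: "b \<in> U \<and> a \<notin> U"
      show "sum f U < \<mu> U"
      proof (rule ccontr)
        assume "\<not> sum f U < \<mu> U"
        then have "tight \<mu> f U" using IB_le[OF f, of U] by (simp add: tight_def)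
        then have "U \<in> F" using U by (simp add: F_def)
        then have "U \<subseteq> W" by (auto simp: W_def)
        then show False using U bW by auto
      qed
    qed
  qed
  moreover have "f - dl a + dl b = f + dl b - dl a" by (simp add: algebra_simps)
  ultimately show ?thesis using fb by auto
qed

lemma finite_bounded_funs: "finite {f::'a::finite \<Rightarrow> int. \<forall>x. lo \<le> f x \<and> f x \<le> hi}"
proof -
  have "finite {f::'a \<Rightarrow> int. \<forall>x. (x \<in> UNIV \<longrightarrow> f x \<in> {lo..hi}) \<and> (x \<notin> UNIV \<longrightarrow> f x = 0)}"
    by (rule finite_set_of_finite_funs) auto
  then show ?thesis by simp
qed

lemma finite_IB:
  assumes nondecr: "\<forall>A B. A \<subseteq> B \<longrightarrow> \<mu> A \<le> \<mu> B"
  shows "finite (IB \<mu>)"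
proof (rule finite_subset[OF _ finite_bounded_funs[of 0 "\<mu> UNIV"]])
  show "IB \<mu> \<subseteq> {f. \<forall>x. 0 \<le> f x \<and> f x \<le> \<mu> UNIV}"
  proof
    fix f assume f: "f \<in> IB \<mu>"
    have "f x \<le> \<mu> UNIV" for x
    proof -
      have "f x \<le> \<mu> {x}" using IB_le[OF f, of "{x}"] by simp
      moreover have "\<mu> {x} \<le> \<mu> UNIV" using nondecr by blast
      ultimately show ?thesis by simp
    qed
    then show "f \<in> {f. \<forall>x. 0 \<le> f x \<and> f x \<le> \<mu> UNIV}" using IB_nonneg[OF f] by auto
  qed
qed

definition IAi :: "('a::{finite,linorder} set \<Rightarrow> int) \<Rightarrow> ('a \<Rightarrow> int) \<Rightarrow> 'a \<Rightarrow> bool" where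
  "IAi \<mu> f s = (\<not> (\<exists>s'. s' < s \<and> f - dl s + dl s' \<in> IB \<mu>))"

definition EAi :: "('a::{finite,linorder} set \<Rightarrow> int) \<Rightarrow> ('a \<Rightarrow> int) \<Rightarrow> 'a \<Rightarrow> bool" where
  "EAi \<mu> f s = (\<not> (\<exists>s'. s' < s \<and> f + dl s - dl s' \<in> IB \<mu>))"

lemma first_diff:
  fixes f g :: "'a::{finite,linorder} \<Rightarrow> int"
  assumes "f \<noteq> g"
  obtains a where "f a \<noteq> g a" "\<forall>t<a. f t = g t"
proof -
  define D where "D = {s. f s \<noteq> g s}"
  have "D \<noteq> {}" using assms by (auto simp: D_def)
  then have "Min D \<in> D \<and> (\<forall>t\<in>D. Min D \<le> t)" by (auto intro: Min_in Min_le)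
  then obtain a where a: "a \<in> D" "\<forall>t\<in>D. a \<le> t" by blast
  have "\<forall>t<a. f t = g t"
  proof (intro allI impI)
    fix t assume "t < a"
    then have "t \<notin> D" using a(2) by (metis leD)
    then show "f t = g t" by (simp add: D_def)
  qed
  moreover have "f a \<noteq> g a" using a(1) by (simp add: D_def)
  ultimately show ?thesis using that by blast
qed

lemma uniq_int_half:
  assumes submod: "\<forall>A B. \<mu> (A \<union> B) + \<mu> (A \<inter> B) \<le> \<mu> A + \<mu> B"
    and f: "f \<in> IB \<mu>" and g: "g \<in> IB \<mu>" and xg: "\<forall>s. x s \<le> g s"
    and actf: "\<forall>s. x s < f s \<longrightarrow> IAi \<mu> f s"
    and a: "f a < g a" "\<forall>t<a. f t = g t"
  shows False
proof -
  obtain b where b: "g b < f b" "f - dl b + dl a \<in> IB \<mu>" using exch1[OF submod f g a(1)] by blast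
  have "b \<noteq> a" using a b by auto
  moreover have "\<not> b < a" using a(2) b(1) by force
  ultimately have "a < b" by auto
  moreover have "IAi \<mu> f b" using actf xg b(1) by (meson order_le_less_trans)
  ultimately show False using b(2) by (auto simp: IAi_def)
qed

lemma uniq_int:
  assumes submod: "\<forall>A B. \<mu> (A \<union> B) + \<mu> (A \<inter> B) \<le> \<mu> A + \<mu> B"
    and f: "f \<in> IB \<mu>" and g: "g \<in> IB \<mu>" and xf: "\<forall>s. x s \<le> f s" and xg: "\<forall>s. x s \<le> g s"
    and actf: "\<forall>s. x s < f s \<longrightarrow> IAi \<mu> f s" and actg: "\<forall>s. x s < g s \<longrightarrow> IAi \<mu> g s"
  shows "f = g"
proof (rule ccontr)
  assume "f \<noteq> g"
  then obtain a where a: "f a \<noteq> g a" "\<forall>t<a. f t = g t" by (rule first_diff)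
  show False
  proof (cases "f a < g a")
    case True
    show False by (rule uniq_int_half[OF submod f g xg actf True a(2)])
  next
    case False
    then have "g a < f a" using a(1) by auto
    moreover have "\<forall>t<a. g t = f t" using a(2) by simp
    ultimately show False using uniq_int_half[OF submod g f xf actg] by blast
  qed
qed

lemma uniq_ext_half:
  assumes submod: "\<forall>A B. \<mu> (A \<union> B) + \<mu> (A \<inter> B) \<le> \<mu> A + \<mu> B"
    and f: "f \<in> IB \<mu>" and g: "g \<in> IB \<mu>" and xg: "\<forall>s. g s \<le> x s"
    and actf: "\<forall>s. f s < x s \<longrightarrow> EAi \<mu> f s"
    and a: "g a < f a" "\<forall>t<a. f t = g t"
  shows False
proof -
  obtain b where b: "f b < g b" "f + dl b - dl a \<in> IB \<mu>" using exch2[OF submod f g a(1)] by blast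
  have "b \<noteq> a" using a b by auto
  moreover have "\<not> b < a" using a(2) b(1) by force
  ultimately have "a < b" by auto
  moreover have "EAi \<mu> f b" using actf xg b(1) by (meson order_less_le_trans)
  ultimately show False using b(2) by (auto simp: EAi_def)
qed

lemma uniq_ext:
  assumes submod: "\<forall>A B. \<mu> (A \<union> B) + \<mu> (A \<inter> B) \<le> \<mu> A + \<mu> B"
    and f: "f \<in> IB \<mu>" and g: "g \<in> IB \<mu>" and xf: "\<forall>s. f s \<le> x s" and xg: "\<forall>s. g s \<le> x s"
    and actf: "\<forall>s. f s < x s \<longrightarrow> EAi \<mu> f s" and actg: "\<forall>s. g s < x s \<longrightarrow> EAi \<mu> g s"
  shows "f = g"
proof (rule ccontr)
  assume "f \<noteq> g"
  then obtain a where a: "f a \<noteq> g a" "\<forall>t<a. f t = g t" by (rule first_diff)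
  show False
  proof (cases "g a < f a")
    case True
    show False by (rule uniq_ext_half[OF submod f g xg actf True a(2)])
  next
    case False
    then have "f a < g a" using a(1) by auto
    moreover have "\<forall>t<a. g t = f t" using a(2) by simp
    ultimately show False using uniq_ext_half[OF submod g f xf actg] by blast
  qed
qed

definition wt :: "'a::{finite,linorder} \<Rightarrow> int" where
  "wt s = int (card {t. t < s})"

definition pot :: "('a::{finite,linorder} \<Rightarrow> int) \<Rightarrow> int" where
  "pot f = (\<Sum>s\<in>UNIV. f s * wt s)"

lemma wt_mono: "s' < s \<Longrightarrow> wt s' < wt s"
  unfolding wt_def by (auto intro!: psubset_card_mono)

lemma pot_dl: "pot (dl a) = wt a"
proof -
  have "pot (dl a) = (\<Sum>s\<in>UNIV. if s = a then wt s else 0)"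
    unfolding pot_def by (rule sum.cong) (auto simp: dl_def)
  also have "\<dots> = wt a" by simp
  finally show ?thesis .
qed

lemma pot_add: "pot (f + g) = pot f + pot g" and pot_diff: "pot (f - g) = pot f - pot g"
  by (simp_all add: pot_def algebra_simps sum.distrib sum_subtractf)

lemma ex_int:
  assumes nondecr: "\<forall>A B. A \<subseteq> B \<longrightarrow> \<mu> A \<le> \<mu> B"
    and ex: "\<exists>f\<in>IB \<mu>. \<forall>s. x s \<le> f s"
  shows "\<exists>f\<in>IB \<mu>. (\<forall>s. x s \<le> f s) \<and> (\<forall>s. x s < f s \<longrightarrow> IAi \<mu> f s)"
proof -
  define A where "A = {f\<in>IB \<mu>. \<forall>s. x s \<le> f s}"
  have fin: "finite A" using finite_IB[OF nondecr] by (auto simp: A_def)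
  have ne: "A \<noteq> {}" using ex by (auto simp: A_def)
  define m where "m = Min (pot ` A)"
  have "m \<in> pot ` A" using fin ne by (simp add: m_def)
  then obtain f where fA: "f \<in> A" and pf: "pot f = m" by auto
  have mn: "\<forall>g\<in>A. pot f \<le> pot g" using fin pf by (auto simp: m_def)
  have "IAi \<mu> f s" if "x s < f s" for s
  proof (rule ccontr)
    assume "\<not> IAi \<mu> f s"
    then obtain s' where s': "s' < s" "f - dl s + dl s' \<in> IB \<mu>" by (auto simp: IAi_def)
    have "\<forall>t. x t \<le> (f - dl s + dl s') t"
    proof
      fix t have "x t \<le> f t" using fA by (auto simp: A_def)
      then show "x t \<le> (f - dl s + dl s') t" using that by (auto simp: dl_def)
    qed
    then have "f - dl s + dl s' \<in> A" using s' by (auto simp: A_def)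
    then have "pot f \<le> pot (f - dl s + dl s')" using mn by blast
    also have "\<dots> = pot f - wt s + wt s'" by (simp add: pot_add pot_diff pot_dl)
    finally show False using wt_mono[OF s'(1)] by simp
  qed
  then show ?thesis using fA by (auto simp: A_def)
qed

lemma ex_ext:
  assumes nondecr: "\<forall>A B. A \<subseteq> B \<longrightarrow> \<mu> A \<le> \<mu> B"
    and ex: "\<exists>f\<in>IB \<mu>. \<forall>s. f s \<le> x s"
  shows "\<exists>f\<in>IB \<mu>. (\<forall>s. f s \<le> x s) \<and> (\<forall>s. f s < x s \<longrightarrow> EAi \<mu> f s)"
proof -
  define A where "A = {f\<in>IB \<mu>. \<forall>s. f s \<le> x s}"
  have fin: "finite A" using finite_IB[OF nondecr] by (auto simp: A_def)
  have ne: "A \<noteq> {}" using ex by (auto simp: A_def)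
  define m where "m = Max (pot ` A)"
  have "m \<in> pot ` A" using fin ne by (simp add: m_def)
  then obtain f where fA: "f \<in> A" and pf: "pot f = m" by auto
  have mn: "\<forall>g\<in>A. pot g \<le> pot f" using fin pf by (auto simp: m_def)
  have "EAi \<mu> f s" if "f s < x s" for s
  proof (rule ccontr)
    assume "\<not> EAi \<mu> f s"
    then obtain s' where s': "s' < s" "f + dl s - dl s' \<in> IB \<mu>" by (auto simp: EAi_def)
    have "\<forall>t. (f + dl s - dl s') t \<le> x t"
    proof
      fix t have "f t \<le> x t" using fA by (auto simp: A_def)
      then show "(f + dl s - dl s') t \<le> x t" using that by (auto simp: dl_def)
    qed
    then have "f + dl s - dl s' \<in> A" using s' by (auto simp: A_def)
    then have "pot (f + dl s - dl s') \<le> pot f" using mn by blast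
    moreover have "pot (f + dl s - dl s') = pot f + wt s - wt s'" by (simp add: pot_add pot_diff pot_dl)
    ultimately show False using wt_mono[OF s'(1)] by simp
  qed
  then show ?thesis using fA by (auto simp: A_def)
qed

lemma augment:
  fixes z u :: "'a::finite \<Rightarrow> int"
  assumes "\<forall>s. z s \<le> u s" "indep \<mu> z"
  shows "\<exists>f. (\<forall>s. z s \<le> f s) \<and> (\<forall>s. f s \<le> u s) \<and> indep \<mu> f \<and>
             (\<forall>s. f s < u s \<longrightarrow> (\<exists>U. s \<in> U \<and> tight \<mu> f U))"
  using assms
proof (induction z rule: measure_induct_rule[of "\<lambda>z. nat (\<Sum>s\<in>UNIV. u s - z s)"])
  case (less z)
  show ?case
  proof (cases "\<forall>s. z s < u s \<longrightarrow> (\<exists>U. s \<in> U \<and> tight \<mu> z U)")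
    case True
    then show ?thesis using less.prems by (intro exI[of _ z]) auto
  next
    case False
    then obtain s where s: "z s < u s" "\<forall>U. s \<in> U \<longrightarrow> \<not> tight \<mu> z U" by blast
    define z' where "z' = z + dl s"
    have z'1: "\<forall>t. z' t \<le> u t" using less.prems(1) s(1) by (auto simp: z'_def dl_def)
    have sz': "sum z' U = sum z U + (if s \<in> U then 1 else 0)" for U
      by (simp add: z'_def sum.distrib sum_dl)
    have z'2: "indep \<mu> z'"
      unfolding indep_def
    proof (intro conjI allI)
      fix t show "0 \<le> z' t" using less.prems(2) by (auto simp: z'_def dl_def indep_def)
    next
      fix U
      have "sum z U \<le> \<mu> U" using less.prems(2) by (auto simp: indep_def)
      moreover have "s \<in> U \<Longrightarrow> sum z U \<noteq> \<mu> U" using s(2) by (auto simp: tight_def)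
      ultimately show "sum z' U \<le> \<mu> U" using sz'[of U] by auto
    qed
    have "(\<Sum>t\<in>UNIV. u t - z' t) = (\<Sum>t\<in>UNIV. u t - z t) - 1"
      by (simp add: z'_def sum.distrib sum_subtractf sum_dl)
    moreover have "0 \<le> (\<Sum>t\<in>UNIV. u t - z' t)" using z'1 by (intro sum_nonneg) auto
    ultimately have "nat (\<Sum>t\<in>UNIV. u t - z' t) < nat (\<Sum>t\<in>UNIV. u t - z t)" by linarith
    from less.IH[OF this z'1 z'2] obtain f where
      f: "\<forall>t. z' t \<le> f t" "\<forall>t. f t \<le> u t" "indep \<mu> f" "\<forall>t. f t < u t \<longrightarrow> (\<exists>U. t \<in> U \<and> tight \<mu> f U)"
      by blast
    have "z t \<le> z' t" for t by (simp add: z'_def dl_def)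
    then have "\<forall>t. z t \<le> f t" using f(1) by (meson order_trans)
    then show ?thesis using f by (intro exI[of _ f]) simp
  qed
qed

lemma maximal_bound:
  fixes y :: "real^'a::finite"
  assumes submod: "\<forall>A B. \<mu> (A \<union> B) + \<mu> (A \<inter> B) \<le> \<mu> A + \<mu> B"
    and f: "indep \<mu> f" "\<forall>s. f s \<le> u s" "\<forall>s. f s < u s \<longrightarrow> (\<exists>U. s \<in> U \<and> tight \<mu> f U)"
    and y: "\<forall>U. y \<bullet> ind U \<le> of_int (\<mu> U)" "\<forall>s. y $ s \<le> of_int (u s)"
  shows "y \<bullet> ind UNIV \<le> of_int (sum f UNIV)"
proof -
  define F where "F = {U. tight \<mu> f U}"
  define W where "W = \<Union>F"
  have allF: "\<forall>U\<in>F. tight \<mu> f U" by (simp add: F_def)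
  have tW: "F \<noteq> {} \<Longrightarrow> tight \<mu> f W"
  proof -
    assume ne: "F \<noteq> {}"
    have "finite F" by (rule finite)
    from tight_family[OF submod f(1) this ne allF] show ?thesis by (simp add: W_def)
  qed
  have out: "f s = u s" if "s \<notin> W" for s
  proof (rule ccontr)
    assume "f s \<noteq> u s"
    then have "f s < u s" using f(2) by (simp add: order_less_le)
    then obtain U where "s \<in> U" "tight \<mu> f U" using f(3) by blast
    then have "s \<in> W" unfolding W_def F_def by blast
    then show False using that by simp
  qed
  have "y \<bullet> ind UNIV = (\<Sum>s\<in>W. y $ s) + (\<Sum>s\<in>-W. y $ s)"
    by (simp add: inner_ind sum_split_UNIV[of _ W])
  also have "(\<Sum>s\<in>-W. y $ s) \<le> (\<Sum>s\<in>-W. of_int (f s))"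
    using y(2) out by (intro sum_mono) auto
  also have "(\<Sum>s\<in>W. y $ s) \<le> (\<Sum>s\<in>W. of_int (f s))"
  proof (cases "F = {}")
    case True
    then have "W = {}" by (simp add: W_def)
    then show ?thesis by simp
  next
    case False
    then have "sum f W = \<mu> W" using tW by (simp add: tight_def)
    then show ?thesis using y(1)[rule_format, of W] by (simp add: inner_ind flip: of_int_sum)
  qed
  finally show ?thesis by (simp add: sum_split_UNIV[of _ W] flip: of_int_sum)
qed

lemma inv_simplex_sub: "inv_simplex \<subseteq> {v::real^'a::finite. (\<forall>s. v $ s \<le> 0) \<and> (\<Sum>s\<in>UNIV. v $ s) = -1}"
  unfolding inv_simplex_def
proof (rule hull_minimal)
  show "range (\<lambda>s. - ind {s}) \<subseteq> {v::real^'a. (\<forall>s. v $ s \<le> 0) \<and> (\<Sum>s\<in>UNIV. v $ s) = -1}"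
    by (auto simp: ind_def sum_negf)
  show "convex {v::real^'a. (\<forall>s. v $ s \<le> 0) \<and> (\<Sum>s\<in>UNIV. v $ s) = -1}"
    unfolding convex_def
  proof (intro ballI allI impI)
    fix x y :: "real^'a" and u v :: real
    assume x: "x \<in> {v. (\<forall>s. v $ s \<le> 0) \<and> (\<Sum>s\<in>UNIV. v $ s) = -1}"
       and y: "y \<in> {v. (\<forall>s. v $ s \<le> 0) \<and> (\<Sum>s\<in>UNIV. v $ s) = -1}"
       and uv: "0 \<le> u" "0 \<le> v" "u + v = 1"
    have "(u *\<^sub>R x + v *\<^sub>R y) $ s \<le> 0" for s
      using x y uv by (auto intro!: add_nonpos_nonpos mult_nonneg_nonpos)
    moreover have "(\<Sum>s\<in>UNIV. (u *\<^sub>R x + v *\<^sub>R y) $ s) = u * (\<Sum>s\<in>UNIV. x $ s) + v * (\<Sum>s\<in>UNIV. y $ s)"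
      by (simp add: sum.distrib sum_distrib_left)
    ultimately show "u *\<^sub>R x + v *\<^sub>R y \<in> {v. (\<forall>s. v $ s \<le> 0) \<and> (\<Sum>s\<in>UNIV. v $ s) = -1}"
      using x y uv by (simp add: algebra_simps)
  qed
qed

lemma std_simplex_sub: "std_simplex \<subseteq> {v::real^'a::finite. (\<forall>s. 0 \<le> v $ s) \<and> (\<Sum>s\<in>UNIV. v $ s) = 1}"
  unfolding std_simplex_def
proof (rule hull_minimal)
  show "range (\<lambda>s. ind {s}) \<subseteq> {v::real^'a. (\<forall>s. 0 \<le> v $ s) \<and> (\<Sum>s\<in>UNIV. v $ s) = 1}"
    by (auto simp: ind_def)
  show "convex {v::real^'a. (\<forall>s. 0 \<le> v $ s) \<and> (\<Sum>s\<in>UNIV. v $ s) = 1}"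
    unfolding convex_def
  proof (intro ballI allI impI)
    fix x y :: "real^'a" and u v :: real
    assume x: "x \<in> {v. (\<forall>s. 0 \<le> v $ s) \<and> (\<Sum>s\<in>UNIV. v $ s) = 1}"
       and y: "y \<in> {v. (\<forall>s. 0 \<le> v $ s) \<and> (\<Sum>s\<in>UNIV. v $ s) = 1}"
       and uv: "0 \<le> u" "0 \<le> v" "u + v = 1"
    have "0 \<le> (u *\<^sub>R x + v *\<^sub>R y) $ s" for s
      using x y uv by auto
    moreover have "(\<Sum>s\<in>UNIV. (u *\<^sub>R x + v *\<^sub>R y) $ s) = u * (\<Sum>s\<in>UNIV. x $ s) + v * (\<Sum>s\<in>UNIV. y $ s)"
      by (simp add: sum.distrib sum_distrib_left)
    ultimately show "u *\<^sub>R x + v *\<^sub>R y \<in> {v. (\<forall>s. 0 \<le> v $ s) \<and> (\<Sum>s\<in>UNIV. v $ s) = 1}"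
      using x y uv by simp
  qed
qed

lemma scaled_simplex_mem:
  fixes c :: "'a::finite \<Rightarrow> int" and G :: "(real^'a) set" and g :: "'a \<Rightarrow> real^'a"
  assumes c: "\<forall>s. 0 \<le> c s" "sum c UNIV = int k"
    and G: "G = convex hull (range g)"
    and comp: "\<And>s t. g s $ t = (if t = s then e else 0)" and e: "e * e = 1"
  shows "(\<chi> t. e * of_int (c t)) \<in> (\<lambda>x. real k *\<^sub>R x) ` G"
proof (cases "k = 0")
  case True
  then have "\<forall>s\<in>UNIV. c s = 0" using c sum_nonneg_eq_0_iff[of UNIV c] by auto
  then have "(\<chi> t. e * of_int (c t)) = real k *\<^sub>R g undefined" using True by (simp add: vec_eq_iff)
  moreover have "g undefined \<in> G" unfolding G by (rule hull_inc) simp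
  ultimately show ?thesis by blast
next
  case False
  define v where "v = (\<Sum>s\<in>UNIV. (of_int (c s) / real k) *\<^sub>R g s)"
  have "v \<in> G" unfolding v_def G
  proof (rule convex_sum)
    show "(\<Sum>i\<in>UNIV. of_int (c i) / real k) = 1"
    proof -
      have "(\<Sum>i\<in>UNIV. of_int (c i) / real k) = (\<Sum>i\<in>UNIV. real_of_int (c i)) / real k"
        by (rule sum_divide_distrib[symmetric])
      also have "(\<Sum>i\<in>UNIV. real_of_int (c i)) = real_of_int (sum c UNIV)" by simp
      also have "\<dots> = real k" using c(2) by simp
      finally show ?thesis using False by simp
    qed
    show "\<And>i. i \<in> UNIV \<Longrightarrow> 0 \<le> of_int (c i) / real k" using c(1) by simp
    show "\<And>i. i \<in> UNIV \<Longrightarrow> g i \<in> convex hull range g" by (rule hull_inc) simp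
  qed simp_all
  moreover have "(\<chi> t. e * of_int (c t)) = real k *\<^sub>R v"
  proof (subst vec_eq_iff, intro allI)
    fix t
    have "(real k *\<^sub>R v) $ t = real k * (\<Sum>s\<in>UNIV. of_int (c s) / real k * (if t = s then e else 0))"
      by (simp add: v_def comp)
    also have "\<dots> = real k * (of_int (c t) / real k * e)"
      by (simp add: if_distrib cong: if_cong)
    also have "\<dots> = e * of_int (c t)" using False by simp
    finally show "(\<chi> t. e * of_int (c t)) $ t = (real k *\<^sub>R v) $ t" by simp
  qed
  ultimately show ?thesis by blast
qed

lemma B_mu_facts:
  assumes "y \<in> B_mu \<mu>"
  shows "\<forall>s. 0 \<le> y $ s" "\<forall>U. y \<bullet> ind U \<le> of_int (\<mu> U)" "y \<bullet> ind UNIV = of_int (\<mu> UNIV)"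
  using assms by (auto simp: B_mu_def P_mu_def)

lemma inner_ind_single: "y \<bullet> ind {s} = y $ s"
  by (simp add: inner_ind)

lemma geo_inv:
  assumes submod: "\<forall>A B. \<mu> (A \<union> B) + \<mu> (A \<inter> B) \<le> \<mu> A + \<mu> B"
    and nondecr: "\<forall>A B. A \<subseteq> B \<longrightarrow> \<mu> A \<le> \<mu> B"
  shows "integer_points (minkowski (B_mu \<mu>) ((\<lambda>x. real k *\<^sub>R x) ` inv_simplex))
         = vi ` {h. (\<exists>f\<in>IB \<mu>. \<forall>s. h s \<le> f s) \<and> sum h UNIV = \<mu> UNIV - int k}"
proof (intro equalityI subsetI)
  fix x assume "x \<in> integer_points (minkowski (B_mu \<mu>) ((\<lambda>x. real k *\<^sub>R x) ` inv_simplex))"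
  then obtain y v where xyv: "x = y + real k *\<^sub>R v" and yB: "y \<in> B_mu \<mu>" and vI: "v \<in> inv_simplex"
    and xi: "\<forall>s. x $ s \<in> \<int>"
    by (auto simp: integer_points_def minkowski_def)
  have vneg: "\<forall>s. v $ s \<le> 0" and vsum: "(\<Sum>s\<in>UNIV. v $ s) = -1" using inv_simplex_sub vI by blast+
  note y = B_mu_facts[OF yB]
  define h where "h = (\<lambda>s. \<lfloor>x $ s\<rfloor>)"
  have xh: "x = vi h" unfolding h_def by (rule integer_vec[OF xi])
  have hx: "of_int (h s) = x $ s" for s using xh by (simp add: vi_def vec_eq_iff)
  have hy: "of_int (h s) \<le> y $ s" for s
    using hx[of s] xyv vneg by (simp add: mult_nonneg_nonpos)
  define z where "z = (\<lambda>s. max (h s) 0)"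
  define u where "u = (\<lambda>s. z s + \<bar>\<mu> UNIV\<bar> + 1)"
  have zu: "\<forall>s. z s \<le> u s" by (simp add: u_def)
  have zy: "of_int (z s) \<le> y $ s" for s using hy[of s] y(1) by (cases "h s \<le> 0") (auto simp: z_def max_def)
  have zind: "indep \<mu> z" unfolding indep_def
  proof (intro conjI allI)
    fix s show "0 \<le> z s" by (simp add: z_def)
  next
    fix U
    have "real_of_int (sum z U) = (\<Sum>s\<in>U. real_of_int (z s))" by simp
    also have "\<dots> \<le> (\<Sum>s\<in>U. y $ s)" by (rule sum_mono) (rule zy)
    also have "\<dots> = y \<bullet> ind U" by (simp add: inner_ind)
    also have "\<dots> \<le> of_int (\<mu> U)" using y(2) by blast
    finally show "sum z U \<le> \<mu> U" by linarith
  qed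
  obtain f where f: "\<forall>s. z s \<le> f s" "\<forall>s. f s \<le> u s" "indep \<mu> f"
      "\<forall>s. f s < u s \<longrightarrow> (\<exists>U. s \<in> U \<and> tight \<mu> f U)"
    using augment[OF zu zind] by blast
  have yu: "\<forall>s. y $ s \<le> of_int (u s)"
  proof
    fix s
    have "y $ s \<le> of_int (\<mu> {s})" using y(2) inner_ind_single by metis
    also have "\<dots> \<le> of_int (\<mu> UNIV)" using nondecr by simp
    also have "\<dots> \<le> of_int (u s)" by (simp add: u_def z_def)
    finally show "y $ s \<le> of_int (u s)" .
  qed
  have "y \<bullet> ind UNIV \<le> of_int (sum f UNIV)" by (rule maximal_bound[OF submod f(3,2,4) y(2) yu])
  then have "\<mu> UNIV \<le> sum f UNIV" using y(3) by (simp del: of_int_sum)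
  moreover have "sum f UNIV \<le> \<mu> UNIV" using f(3) by (simp add: indep_def)
  ultimately have fIB: "f \<in> IB \<mu>" using f(3) by (simp add: IB_def)
  have hf: "\<forall>s. h s \<le> f s" using f(1) by (metis max.bounded_iff z_def)
  have "real_of_int (sum h UNIV) = (\<Sum>s\<in>UNIV. x $ s)" by (simp add: hx)
  also have "\<dots> = (\<Sum>s\<in>UNIV. y $ s) + real k * (\<Sum>s\<in>UNIV. v $ s)"
    by (simp add: xyv sum.distrib sum_distrib_left)
  also have "\<dots> = of_int (\<mu> UNIV) - real k" using y(3) vsum by (simp add: inner_ind)
  finally have "sum h UNIV = \<mu> UNIV - int k" by linarith
  then show "x \<in> vi ` {h. (\<exists>f\<in>IB \<mu>. \<forall>s. h s \<le> f s) \<and> sum h UNIV = \<mu> UNIV - int k}"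
    using xh hf fIB by blast
next
  fix x assume "x \<in> vi ` {h. (\<exists>f\<in>IB \<mu>. \<forall>s. h s \<le> f s) \<and> sum h UNIV = \<mu> UNIV - int k}"
  then obtain h f where xh: "x = vi h" and fIB: "f \<in> IB \<mu>" and hf: "\<forall>s. h s \<le> f s"
    and hs: "sum h UNIV = \<mu> UNIV - int k" by blast
  define c where "c = (\<lambda>s. f s - h s)"
  have c1: "\<forall>s. 0 \<le> c s" using hf by (simp add: c_def)
  have c2: "sum c UNIV = int k" using hs IB_sum[OF fIB] by (simp add: c_def sum_subtractf)
  have comp: "\<And>s t. (- ind {s} :: real^'a) $ t = (if t = s then -1 else 0)" by (simp add: ind_def)
  have m: "(\<chi> t. (-1) * of_int (c t)) \<in> (\<lambda>x. real k *\<^sub>R x) ` inv_simplex"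
    by (rule scaled_simplex_mem[OF c1 c2 inv_simplex_def comp]) simp
  have xe: "x = vi f + (\<chi> t. (-1) * of_int (c t))" by (simp add: xh vi_def vec_eq_iff c_def)
  have vf: "vi f \<in> B_mu \<mu>" using fIB by (simp add: vi_in_B)
  have "x \<in> minkowski (B_mu \<mu>) ((\<lambda>x. real k *\<^sub>R x) ` inv_simplex)"
    unfolding minkowski_def using xe vf m by blast
  moreover have "\<forall>s. x $ s \<in> \<int>" using xh vi_integer by simp
  ultimately show "x \<in> integer_points (minkowski (B_mu \<mu>) ((\<lambda>x. real k *\<^sub>R x) ` inv_simplex))"
    by (simp add: integer_points_def)
qed

lemma geo_std:
  assumes submod: "\<forall>A B. \<mu> (A \<union> B) + \<mu> (A \<inter> B) \<le> \<mu> A + \<mu> B"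
    and nondecr: "\<forall>A B. A \<subseteq> B \<longrightarrow> \<mu> A \<le> \<mu> B"
  shows "integer_points (minkowski (B_mu \<mu>) ((\<lambda>x. real k *\<^sub>R x) ` std_simplex))
         = vi ` {h. (\<exists>f\<in>IB \<mu>. \<forall>s. f s \<le> h s) \<and> sum h UNIV = \<mu> UNIV + int k}"
proof (intro equalityI subsetI)
  fix x assume "x \<in> integer_points (minkowski (B_mu \<mu>) ((\<lambda>x. real k *\<^sub>R x) ` std_simplex))"
  then obtain y v where xyv: "x = y + real k *\<^sub>R v" and yB: "y \<in> B_mu \<mu>" and vI: "v \<in> std_simplex"
    and xi: "\<forall>s. x $ s \<in> \<int>"
    by (auto simp: integer_points_def minkowski_def)
  have vpos: "\<forall>s. 0 \<le> v $ s" and vsum: "(\<Sum>s\<in>UNIV. v $ s) = 1" using std_simplex_sub vI by blast+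
  note y = B_mu_facts[OF yB]
  define h where "h = (\<lambda>s. \<lfloor>x $ s\<rfloor>)"
  have xh: "x = vi h" unfolding h_def by (rule integer_vec[OF xi])
  have hx: "of_int (h s) = x $ s" for s using xh by (simp add: vi_def vec_eq_iff)
  have hy: "y $ s \<le> of_int (h s)" for s
    using hx[of s] xyv vpos by simp
  have zu: "\<forall>s. (0::int) \<le> h s"
  proof
    fix s have "0 \<le> real_of_int (h s)" using hy[of s] y(1) by (meson order_trans)
    then show "0 \<le> h s" by simp
  qed
  have zind: "indep \<mu> (\<lambda>s. 0)" unfolding indep_def
  proof (intro conjI allI)
    fix s show "(0::int) \<le> 0" by simp
  next
    fix U
    have "0 \<le> y \<bullet> ind U" using y(1) by (simp add: inner_ind sum_nonneg)
    also have "\<dots> \<le> of_int (\<mu> U)" using y(2) by blast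
    finally show "(\<Sum>s\<in>U. (0::int)) \<le> \<mu> U" by simp
  qed
  obtain f where f: "\<forall>s. 0 \<le> f s" "\<forall>s. f s \<le> h s" "indep \<mu> f"
      "\<forall>s. f s < h s \<longrightarrow> (\<exists>U. s \<in> U \<and> tight \<mu> f U)"
    using augment[of "\<lambda>s. 0" h, OF zu zind] by blast
  have yu: "\<forall>s. y $ s \<le> of_int (h s)" using hy by blast
  have "y \<bullet> ind UNIV \<le> of_int (sum f UNIV)" by (rule maximal_bound[OF submod f(3,2,4) y(2) yu])
  then have "\<mu> UNIV \<le> sum f UNIV" using y(3) by (simp del: of_int_sum)
  moreover have "sum f UNIV \<le> \<mu> UNIV" using f(3) by (simp add: indep_def)
  ultimately have fIB: "f \<in> IB \<mu>" using f(3) by (simp add: IB_def)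
  have "real_of_int (sum h UNIV) = (\<Sum>s\<in>UNIV. x $ s)" by (simp add: hx)
  also have "\<dots> = (\<Sum>s\<in>UNIV. y $ s) + real k * (\<Sum>s\<in>UNIV. v $ s)"
    by (simp add: xyv sum.distrib sum_distrib_left)
  also have "\<dots> = of_int (\<mu> UNIV) + real k" using y(3) vsum by (simp add: inner_ind)
  finally have "sum h UNIV = \<mu> UNIV + int k" by linarith
  then show "x \<in> vi ` {h. (\<exists>f\<in>IB \<mu>. \<forall>s. f s \<le> h s) \<and> sum h UNIV = \<mu> UNIV + int k}"
    using xh f(2) fIB by blast
next
  fix x assume "x \<in> vi ` {h. (\<exists>f\<in>IB \<mu>. \<forall>s. f s \<le> h s) \<and> sum h UNIV = \<mu> UNIV + int k}"
  then obtain h f where xh: "x = vi h" and fIB: "f \<in> IB \<mu>" and hf: "\<forall>s. f s \<le> h s"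
    and hs: "sum h UNIV = \<mu> UNIV + int k" by blast
  define c where "c = (\<lambda>s. h s - f s)"
  have c1: "\<forall>s. 0 \<le> c s" using hf by (simp add: c_def)
  have c2: "sum c UNIV = int k" using hs IB_sum[OF fIB] by (simp add: c_def sum_subtractf)
  have comp: "\<And>s t. (ind {s} :: real^'a) $ t = (if t = s then 1 else 0)" by (simp add: ind_def)
  have m: "(\<chi> t. 1 * of_int (c t)) \<in> (\<lambda>x. real k *\<^sub>R x) ` std_simplex"
    by (rule scaled_simplex_mem[OF c1 c2 std_simplex_def comp]) simp
  have xe: "x = vi f + (\<chi> t. 1 * of_int (c t))" by (simp add: xh vi_def vec_eq_iff c_def)
  have vf: "vi f \<in> B_mu \<mu>" using fIB by (simp add: vi_in_B)
  have "x \<in> minkowski (B_mu \<mu>) ((\<lambda>x. real k *\<^sub>R x) ` std_simplex)"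
    unfolding minkowski_def using xe vf m by blast
  moreover have "\<forall>s. x $ s \<in> \<int>" using xh vi_integer by simp
  ultimately show "x \<in> integer_points (minkowski (B_mu \<mu>) ((\<lambda>x. real k *\<^sub>R x) ` std_simplex))"
    by (simp add: integer_points_def)
qed

lemma count_funs:
  fixes A :: "'a::{finite,linorder} set"
  shows "card {c::'a\<Rightarrow>int. (\<forall>s. 0 \<le> c s) \<and> (\<forall>s. c s \<noteq> 0 \<longrightarrow> s \<in> A) \<and> sum c UNIV = int k}
         = (k + card A - 1) choose k"
proof -
  define C where "C = {c::'a\<Rightarrow>int. (\<forall>s. 0 \<le> c s) \<and> (\<forall>s. c s \<noteq> 0 \<longrightarrow> s \<in> A) \<and> sum c UNIV = int k}"
  define xs where "xs = sorted_list_of_set A"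
  define L where "L = {l::nat list. size l = card A \<and> sum_list l = k}"
  define \<phi> where "\<phi> = (\<lambda>c::'a\<Rightarrow>int. map (\<lambda>s. nat (c s)) xs)"
  have fA: "finite A" by simp
  have dxs: "distinct xs" "set xs = A" "length xs = card A"
    using fA by (auto simp: xs_def)
  have sumA: "sum c UNIV = sum c A" if "\<forall>s. c s \<noteq> 0 \<longrightarrow> s \<in> A" for c :: "'a \<Rightarrow> int"
  proof -
    have "sum c (- A) = 0" using that by (intro sum.neutral) auto
    then show ?thesis using sum_split_UNIV[of c A] by simp
  qed
  have sl: "sum_list (\<phi> c) = sum (\<lambda>s. nat (c s)) A" for c
    unfolding \<phi>_def using dxs by (simp add: sum_list_distinct_conv_sum_set)
  have natsum: "int (sum (\<lambda>s. nat (c s)) A) = sum c A" if "\<forall>s. 0 \<le> c s" for c :: "'a \<Rightarrow> int"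
    using that by (simp add: of_nat_sum)
  have inj: "inj_on \<phi> C"
  proof (rule inj_onI)
    fix c d assume c: "c \<in> C" and d: "d \<in> C" and eq: "\<phi> c = \<phi> d"
    show "c = d"
    proof
      fix s show "c s = d s"
      proof (cases "s \<in> A")
        case True
        then have "nat (c s) = nat (d s)" using eq dxs(2) by (auto simp: \<phi>_def map_eq_conv)
        then show ?thesis using c d by (auto simp: C_def) (metis nat_eq_iff2)
      next
        case False
        then have "c s = 0" "d s = 0" using c d unfolding C_def by blast+
        then show ?thesis by simp
      qed
    qed
  qed
  have img: "\<phi> ` C = L"
  proof (intro equalityI subsetI)
    fix l assume "l \<in> \<phi> ` C"
    then obtain c where c: "c \<in> C" "l = \<phi> c" by blast
    have "int (sum_list l) = int k"
      using c sl[of c] natsum[of c] sumA[of c] by (auto simp: C_def)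
    then show "l \<in> L" using c dxs by (simp add: L_def \<phi>_def)
  next
    fix l assume l: "l \<in> L"
    define c where "c = (\<lambda>s. if s \<in> A then int (the (map_of (zip xs l) s)) else 0)"
    have len: "length l = length xs" using l dxs by (simp add: L_def)
    have "\<phi> c = l"
    proof (rule nth_equalityI)
      show "length (\<phi> c) = length l" using len by (simp add: \<phi>_def)
      fix i assume "i < length (\<phi> c)"
      then have i: "i < length xs" by (simp add: \<phi>_def)
      have "xs ! i \<in> A" using i dxs(2) nth_mem by blast
      moreover have "map_of (zip xs l) (xs ! i) = Some (l ! i)"
        using map_of_zip_nth[of xs l i] len dxs(1) i by simp
      ultimately show "\<phi> c ! i = l ! i" using i by (simp add: \<phi>_def c_def)
    qed
    moreover have "c \<in> C"
    proof -
      have c0: "\<forall>s. 0 \<le> c s" by (simp add: c_def)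
      have cA: "\<forall>s. c s \<noteq> 0 \<longrightarrow> s \<in> A" by (simp add: c_def)
      have "sum c UNIV = sum c A" using sumA[OF cA] .
      also have "\<dots> = int (sum (\<lambda>s. nat (c s)) A)" using natsum[OF c0] by simp
      also have "\<dots> = int (sum_list (\<phi> c))" using sl[of c] by simp
      also have "\<dots> = int k" using \<open>\<phi> c = l\<close> l by (simp add: L_def)
      finally show ?thesis using c0 cA by (simp add: C_def)
    qed
    ultimately show "l \<in> \<phi> ` C" by blast
  qed
  have "card C = card L" using bij_betw_same_card[of \<phi> C L] inj img by (simp add: bij_betw_def)
  also have "\<dots> = (k + card A - 1) choose k" unfolding L_def by (rule card_length_sum_list)
  finally show ?thesis by (simp add: C_def)
qed

lemma finite_C: "finite {c::'a::finite\<Rightarrow>int. (\<forall>s. 0 \<le> c s) \<and> P c \<and> sum c UNIV = int k}"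
proof (rule finite_subset[OF _ finite_bounded_funs[of 0 "int k"]])
  show "{c::'a\<Rightarrow>int. (\<forall>s. 0 \<le> c s) \<and> P c \<and> sum c UNIV = int k} \<subseteq> {f. \<forall>x. 0 \<le> f x \<and> f x \<le> int k}"
  proof
    fix c :: "'a \<Rightarrow> int" assume c: "c \<in> {c. (\<forall>s. 0 \<le> c s) \<and> P c \<and> sum c UNIV = int k}"
    have "c x \<le> sum c UNIV" for x using c by (intro member_le_sum) auto
    then show "c \<in> {f. \<forall>x. 0 \<le> f x \<and> f x \<le> int k}" using c by auto
  qed
qed

lemma card_int_side:
  assumes submod: "\<forall>A B. \<mu> (A \<union> B) + \<mu> (A \<inter> B) \<le> \<mu> A + \<mu> B"
    and nondecr: "\<forall>A B. A \<subseteq> B \<longrightarrow> \<mu> A \<le> \<mu> B"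
  shows "card {h. (\<exists>f\<in>IB \<mu>. \<forall>s. h s \<le> f s) \<and> sum h UNIV = \<mu> UNIV - int k}
    = (\<Sum>f\<in>IB \<mu>. card {c. (\<forall>s. 0 \<le> c s) \<and> (\<forall>s. c s \<noteq> 0 \<longrightarrow> s \<in> {t. IAi \<mu> f t}) \<and> sum c UNIV = int k})"
proof -
  define H where "H = {h. (\<exists>f\<in>IB \<mu>. \<forall>s. h s \<le> f s) \<and> sum h UNIV = \<mu> UNIV - int k}"
  define C where "C = (\<lambda>f. {c. (\<forall>s. 0 \<le> c s) \<and> (\<forall>s. c s \<noteq> 0 \<longrightarrow> s \<in> {t. IAi \<mu> f t}) \<and> sum c UNIV = int k})"
  define Sg where "Sg = Sigma (IB \<mu>) C"
  define \<psi> where "\<psi> = (\<lambda>(f::'a \<Rightarrow> int, c::'a \<Rightarrow> int). f - c)"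
  have inj: "inj_on \<psi> Sg"
  proof (rule inj_onI)
    fix p q assume p: "p \<in> Sg" and q: "q \<in> Sg" and eq: "\<psi> p = \<psi> q"
    obtain f c where pfc: "p = (f, c)" by (cases p)
    obtain g d where qgd: "q = (g, d)" by (cases q)
    have f: "f \<in> IB \<mu>" "c \<in> C f" using p pfc by (auto simp: Sg_def)
    have g: "g \<in> IB \<mu>" "d \<in> C g" using q qgd by (auto simp: Sg_def)
    have e: "f - c = g - d" using eq pfc qgd by (simp add: \<psi>_def)
    define h where "h = f - c"
    have hf: "\<forall>s. h s \<le> f s" using f(2) by (simp add: h_def C_def)
    have hg: "\<forall>s. h s \<le> g s" using g(2) by (simp add: h_def e C_def)
    have af: "\<forall>s. h s < f s \<longrightarrow> IAi \<mu> f s" using f(2) by (auto simp: h_def C_def)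
    have ag: "\<forall>s. h s < g s \<longrightarrow> IAi \<mu> g s" using g(2) by (auto simp: h_def e C_def)
    have fg: "f = g" by (rule uniq_int[OF submod f(1) g(1) hf hg af ag])
    then have "c = d" using e by (metis diff_left_imp_eq diff_diff_eq2 diff_add_cancel)
    then show "p = q" using pfc qgd fg by simp
  qed
  have img: "\<psi> ` Sg = H"
  proof (intro equalityI subsetI)
    fix h assume "h \<in> \<psi> ` Sg"
    then obtain f c where fc: "f \<in> IB \<mu>" "c \<in> C f" "h = f - c" by (auto simp: Sg_def \<psi>_def)
    have "\<forall>s. h s \<le> f s" using fc by (simp add: C_def)
    moreover have "sum h UNIV = \<mu> UNIV - int k" using fc IB_sum[OF fc(1)] by (simp add: C_def sum_subtractf)
    ultimately show "h \<in> H" using fc(1) by (auto simp: H_def)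
  next
    fix h assume "h \<in> H"
    then have ex: "\<exists>f\<in>IB \<mu>. \<forall>s. h s \<le> f s" and hs: "sum h UNIV = \<mu> UNIV - int k" by (auto simp: H_def)
    obtain f where f: "f \<in> IB \<mu>" "\<forall>s. h s \<le> f s" "\<forall>s. h s < f s \<longrightarrow> IAi \<mu> f s"
      using ex_int[OF nondecr ex] by blast
    have "f - h \<in> C f"
      using f hs IB_sum[OF f(1)] by (auto simp: C_def sum_subtractf) (metis order_less_le)
    then have "(f, f - h) \<in> Sg" using f(1) by (simp add: Sg_def)
    moreover have "h = \<psi> (f, f - h)" by (simp add: \<psi>_def)
    ultimately show "h \<in> \<psi> ` Sg" by blast
  qed
  have "card H = card Sg" using card_image[OF inj] img by simp
  also have "\<dots> = (\<Sum>f\<in>IB \<mu>. card (C f))"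
    unfolding Sg_def by (rule card_SigmaI) (auto simp: finite_IB[OF nondecr] C_def intro: finite_C)
  finally show ?thesis by (simp add: H_def C_def)
qed

lemma card_ext_side:
  assumes submod: "\<forall>A B. \<mu> (A \<union> B) + \<mu> (A \<inter> B) \<le> \<mu> A + \<mu> B"
    and nondecr: "\<forall>A B. A \<subseteq> B \<longrightarrow> \<mu> A \<le> \<mu> B"
  shows "card {h. (\<exists>f\<in>IB \<mu>. \<forall>s. f s \<le> h s) \<and> sum h UNIV = \<mu> UNIV + int k}
    = (\<Sum>f\<in>IB \<mu>. card {c. (\<forall>s. 0 \<le> c s) \<and> (\<forall>s. c s \<noteq> 0 \<longrightarrow> s \<in> {t. EAi \<mu> f t}) \<and> sum c UNIV = int k})"
proof -
  define H where "H = {h. (\<exists>f\<in>IB \<mu>. \<forall>s. f s \<le> h s) \<and> sum h UNIV = \<mu> UNIV + int k}"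
  define C where "C = (\<lambda>f. {c. (\<forall>s. 0 \<le> c s) \<and> (\<forall>s. c s \<noteq> 0 \<longrightarrow> s \<in> {t. EAi \<mu> f t}) \<and> sum c UNIV = int k})"
  define Sg where "Sg = Sigma (IB \<mu>) C"
  define \<psi> where "\<psi> = (\<lambda>(f::'a \<Rightarrow> int, c::'a \<Rightarrow> int). f + c)"
  have inj: "inj_on \<psi> Sg"
  proof (rule inj_onI)
    fix p q assume p: "p \<in> Sg" and q: "q \<in> Sg" and eq: "\<psi> p = \<psi> q"
    obtain f c where pfc: "p = (f, c)" by (cases p)
    obtain g d where qgd: "q = (g, d)" by (cases q)
    have f: "f \<in> IB \<mu>" "c \<in> C f" using p pfc by (auto simp: Sg_def)
    have g: "g \<in> IB \<mu>" "d \<in> C g" using q qgd by (auto simp: Sg_def)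
    have e: "f + c = g + d" using eq pfc qgd by (simp add: \<psi>_def)
    define h where "h = f + c"
    have hf: "\<forall>s. f s \<le> h s" using f(2) by (simp add: h_def C_def)
    have hg: "\<forall>s. g s \<le> h s" using g(2) by (simp add: h_def e C_def)
    have af: "\<forall>s. f s < h s \<longrightarrow> EAi \<mu> f s" using f(2) by (auto simp: h_def C_def)
    have ag: "\<forall>s. g s < h s \<longrightarrow> EAi \<mu> g s" using g(2) by (auto simp: h_def e C_def)
    have fg: "f = g" by (rule uniq_ext[OF submod f(1) g(1) hf hg af ag])
    then have "c = d" using e by simp
    then show "p = q" using pfc qgd fg by simp
  qed
  have img: "\<psi> ` Sg = H"
  proof (intro equalityI subsetI)
    fix h assume "h \<in> \<psi> ` Sg"
    then obtain f c where fc: "f \<in> IB \<mu>" "c \<in> C f" "h = f + c" by (auto simp: Sg_def \<psi>_def)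
    have "\<forall>s. f s \<le> h s" using fc by (simp add: C_def)
    moreover have "sum h UNIV = \<mu> UNIV + int k" using fc IB_sum[OF fc(1)] by (simp add: C_def sum.distrib)
    ultimately show "h \<in> H" using fc(1) by (auto simp: H_def)
  next
    fix h assume "h \<in> H"
    then have ex: "\<exists>f\<in>IB \<mu>. \<forall>s. f s \<le> h s" and hs: "sum h UNIV = \<mu> UNIV + int k" by (auto simp: H_def)
    obtain f where f: "f \<in> IB \<mu>" "\<forall>s. f s \<le> h s" "\<forall>s. f s < h s \<longrightarrow> EAi \<mu> f s"
      using ex_ext[OF nondecr ex] by blast
    have "h - f \<in> C f"
      using f hs IB_sum[OF f(1)] by (auto simp: C_def sum_subtractf) (metis order_less_le)
    then have "(f, h - f) \<in> Sg" using f(1) by (simp add: Sg_def)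
    moreover have "h = \<psi> (f, h - f)" by (simp add: \<psi>_def)
    ultimately show "h \<in> \<psi> ` Sg" by blast
  qed
  have "card H = card Sg" using card_image[OF inj] img by simp
  also have "\<dots> = (\<Sum>f\<in>IB \<mu>. card (C f))"
    unfolding Sg_def by (rule card_SigmaI) (auto simp: finite_IB[OF nondecr] C_def intro: finite_C)
  finally show ?thesis by (simp add: H_def C_def)
qed

lemma min_active:
  fixes f :: "'a::{finite,linorder} \<Rightarrow> int"
  shows "IAi \<mu> f (Min UNIV)" "EAi \<mu> f (Min UNIV)"
proof -
  have "\<not> s' < Min UNIV" for s' :: 'a
  proof -
    have "Min UNIV \<le> s'" by (rule Min.coboundedI) simp_all
    then show ?thesis by (rule leD)
  qed
  then show "IAi \<mu> f (Min UNIV)" "EAi \<mu> f (Min UNIV)" unfolding IAi_def EAi_def by auto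
qed

lemma poly_side:
  fixes \<mu> :: "'a::{finite,linorder} set \<Rightarrow> int" and ib :: "(real, 'a) vec \<Rightarrow> nat" and P :: "('a \<Rightarrow> int) \<Rightarrow> 'a \<Rightarrow> bool"
  assumes ib: "\<And>f. f \<in> IB \<mu> \<Longrightarrow> ib (vi f) = CARD('a) - card {s. P f s}"
    and P0: "\<And>f. f \<in> IB \<mu> \<Longrightarrow> P f (Min UNIV)"
  shows "(\<Sum>j<CARD('a). coeff (\<Sum>f\<in>bases \<mu>. monom 1 (ib f)) j
                 * int ((k + CARD('a) - 1 - j) choose (CARD('a) - 1 - j)))
       = (\<Sum>f\<in>IB \<mu>. int ((k + card {s. P f s} - 1) choose k))"
proof -
  define n where "n = CARD('a)"
  define T where "T = (\<lambda>j. int ((k + n - 1 - j) choose (n - 1 - j)))"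
  have "(\<Sum>j<n. coeff (\<Sum>f\<in>bases \<mu>. monom 1 (ib f)) j * T j)
      = (\<Sum>j<n. \<Sum>f\<in>bases \<mu>. (if ib f = j then T j else 0))"
    by (rule sum.cong) (auto simp: coeff_sum sum_distrib_right intro!: sum.cong)
  also have "\<dots> = (\<Sum>f\<in>bases \<mu>. \<Sum>j<n. (if ib f = j then T j else 0))"
    by (rule sum.swap)
  also have "\<dots> = (\<Sum>f\<in>bases \<mu>. (if ib f < n then T (ib f) else 0))"
    by (rule sum.cong) (simp_all add: sum.delta)
  also have "\<dots> = (\<Sum>f\<in>IB \<mu>. (if ib (vi f) < n then T (ib (vi f)) else 0))"
    unfolding bases_eq by (rule sum.reindex_cong[OF inj_on_subset[OF vi_inj subset_UNIV]]) simp_all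
  also have "\<dots> = (\<Sum>f\<in>IB \<mu>. int ((k + card {s. P f s} - 1) choose k))"
  proof (rule sum.cong)
    fix f assume f: "f \<in> IB \<mu>"
    define m where "m = card {s. P f s}"
    have m1: "1 \<le> m" using P0[OF f] unfolding m_def
      by (metis One_nat_def Suc_leI card_gt_0_iff empty_iff finite mem_Collect_eq)
    have mn: "m \<le> n" unfolding m_def n_def by (rule card_mono) auto
    have ibf: "ib (vi f) = n - m" using ib[OF f] by (simp add: m_def n_def)
    have "k + n - 1 - (n - m) = k + m - 1" "n - 1 - (n - m) = m - 1" using m1 mn by auto
    moreover have "(k + m - 1) choose (m - 1) = (k + m - 1) choose k"
      using binomial_symmetric[of k "k + m - 1"] m1 by simp
    ultimately show "(if ib (vi f) < n then T (ib (vi f)) else 0) = int ((k + card {s. P f s} - 1) choose k)"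
      using m1 mn by (simp add: ibf T_def m_def[symmetric])
  qed simp
  finally show ?thesis by (simp add: n_def T_def)
qed

lemma int_active_IAi: "int_active \<mu> (vi f) s = IAi \<mu> f s"
  by (simp only: int_active_iff IAi_def)

lemma ext_active_EAi: "ext_active \<mu> (vi f) s = EAi \<mu> f s"
  by (simp only: ext_active_iff EAi_def)

theorem theorem2p10:
  fixes \<mu> :: "'a::{finite,linorder} set \<Rightarrow> int" and k :: nat
  assumes submod: "\<forall>A B. \<mu> (A \<union> B) + \<mu> (A \<inter> B) \<le> \<mu> A + \<mu> B"
    and nondecr: "\<forall>A B. A \<subseteq> B \<longrightarrow> \<mu> A \<le> \<mu> B"
  shows "int (card (integer_points (minkowski (B_mu \<mu>) ((\<lambda>x. real k *\<^sub>R x) ` inv_simplex))))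
           = (\<Sum>j<CARD('a). coeff (interior_poly \<mu>) j
                 * int ((k + CARD('a) - 1 - j) choose (CARD('a) - 1 - j)))
         \<and> int (card (integer_points (minkowski (B_mu \<mu>) ((\<lambda>x. real k *\<^sub>R x) ` std_simplex))))
           = (\<Sum>j<CARD('a). coeff (exterior_poly \<mu>) j
                 * int ((k + CARD('a) - 1 - j) choose (CARD('a) - 1 - j)))"
proof
  have injvi: "inj_on vi A" for A :: "('a \<Rightarrow> int) set" using vi_inj by (rule inj_on_subset) simp
  have "int (card (integer_points (minkowski (B_mu \<mu>) ((\<lambda>x. real k *\<^sub>R x) ` inv_simplex))))
      = int (card {h. (\<exists>f\<in>IB \<mu>. \<forall>s. h s \<le> f s) \<and> sum h UNIV = \<mu> UNIV - int k})"
    unfolding geo_inv[OF submod nondecr] by (simp add: card_image[OF injvi])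
  also have "\<dots> = (\<Sum>f\<in>IB \<mu>. int (card {c. (\<forall>s. 0 \<le> c s) \<and> (\<forall>s. c s \<noteq> 0 \<longrightarrow> s \<in> {t. IAi \<mu> f t}) \<and> sum c UNIV = int k}))"
    unfolding card_int_side[OF submod nondecr] by simp
  also have "\<dots> = (\<Sum>f\<in>IB \<mu>. int ((k + card {s. IAi \<mu> f s} - 1) choose k))"
    by (rule sum.cong[OF refl]) (simp only: count_funs)
  also have "\<dots> = (\<Sum>j<CARD('a). coeff (interior_poly \<mu>) j
                 * int ((k + CARD('a) - 1 - j) choose (CARD('a) - 1 - j)))"
    unfolding interior_poly_def
    by (rule poly_side[symmetric]) (simp_all add: iota_bar_def int_active_IAi min_active)
  finally show "int (card (integer_points (minkowski (B_mu \<mu>) ((\<lambda>x. real k *\<^sub>R x) ` inv_simplex))))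
           = (\<Sum>j<CARD('a). coeff (interior_poly \<mu>) j
                 * int ((k + CARD('a) - 1 - j) choose (CARD('a) - 1 - j)))" .
next
  have injvi: "inj_on vi A" for A :: "('a \<Rightarrow> int) set" using vi_inj by (rule inj_on_subset) simp
  have "int (card (integer_points (minkowski (B_mu \<mu>) ((\<lambda>x. real k *\<^sub>R x) ` std_simplex))))
      = int (card {h. (\<exists>f\<in>IB \<mu>. \<forall>s. f s \<le> h s) \<and> sum h UNIV = \<mu> UNIV + int k})"
    unfolding geo_std[OF submod nondecr] by (simp add: card_image[OF injvi])
  also have "\<dots> = (\<Sum>f\<in>IB \<mu>. int (card {c. (\<forall>s. 0 \<le> c s) \<and> (\<forall>s. c s \<noteq> 0 \<longrightarrow> s \<in> {t. EAi \<mu> f t}) \<and> sum c UNIV = int k}))"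
    unfolding card_ext_side[OF submod nondecr] by simp
  also have "\<dots> = (\<Sum>f\<in>IB \<mu>. int ((k + card {s. EAi \<mu> f s} - 1) choose k))"
    by (rule sum.cong[OF refl]) (simp only: count_funs)
  also have "\<dots> = (\<Sum>j<CARD('a). coeff (exterior_poly \<mu>) j
                 * int ((k + CARD('a) - 1 - j) choose (CARD('a) - 1 - j)))"
    unfolding exterior_poly_def
    by (rule poly_side[symmetric]) (simp_all add: eps_bar_def ext_active_EAi min_active)
  finally show "int (card (integer_points (minkowski (B_mu \<mu>) ((\<lambda>x. real k *\<^sub>R x) ` std_simplex))))
           = (\<Sum>j<CARD('a). coeff (exterior_poly \<mu>) j
                 * int ((k + CARD('a) - 1 - j) choose (CARD('a) - 1 - j)))" .
qed

end
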